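(* For $n\in\mathbb Z$ and generic $t$, the limit $$e_n(X;t):=\lim_{q\to0}\frac{E_n(X)}{E_n(t^{-1/2})},$$ taken with $t$ fixed, exists in $\mathbb C(t^{1/2})[X^{\pm1}]$. Here $E_n(t^{-1/2})$ is the value of $E_n$ at $X=t^{-1/2}$. Moreover, in the affine Hecke algebra $\mathcal H_{\rm aff}$ with parameter $t$ one has $$e_n(Y;t^{-1})\,\mathcal P_+=\psi_n,$$ where $e_n(Y;t^{-1})$ is obtained from $e_n(X;t)$ by substituting $X\mapsto Y$ and $t\mapsto 1/t$.
   Context: DAHA side. Let $0<q<1$ and let $t$ be a nonzero parameter; write $t=q^k$. The DAHA $\mathcal H$ of type $A_1$ is generated by $T,X^{\pm1},Y^{\pm1}$ with relations $TXT=X^{-1}$, $TY^{-1}T=Y$, $Y^{-1}X^{-1}YXT^2=q^{-1/2}$, and $(T-t^{1/2})(T+t^{-1/2})=0$. It acts on $\mathcal X=\mathbb C[X^{\pm1}]$, with $X=q^x$, as follows: $X$ by multiplication; $T\mapsto t^{1/2}s+\frac{t^{1/2}-t^{-1/2}}{X^2-1}(s-1)$; $Y\mapsto spT$. Here $s(X)=X^{-1}$ and $p(X)=q^{1/2}X$; that is, $(sf)(x)=f(-x)$ and $(pf)(x)=f(x+\tfrac12)$. Nonsymmetric polynomials $E_n$, $n\in\mathbb Z$. Set $n_\sharp=\frac{n-k}2$ for $n\le0$ and $n_\sharp=\frac{n+k}2$ for $n>0$. Then $E_n\in\mathcal X$ is the element with $Y(E_n)=q^{-n_\sharp}E_n$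 (so the eigenvalue is $q^{-n/2}t^{\mp1/2}$) and $E_n=X^n+(\text{lower terms})$. Here "lower terms" means a linear combination of monomials $X^j$ with either $|j|<|n|$, or $j=-n>0$. The coefficients of $E_n$ are rational functions of $q^{1/2},t^{1/2}$. AHA side. $\mathcal H_{\rm aff}$ is the $\mathbb C(t^{1/2})$-algebra generated by $T$ and $\pi$ subject to $\pi^2=1$ and $(T-t^{1/2})(T+t^{-1/2})=0$. Set $$Y=\pi T,\qquad \mathcal P_+=\frac{1+t^{1/2}T}{1+t}.$$ For $n\ge0$ put $T_{n\omega}=(\pi T)^n$, and for $n<0$ put $T_{n\omega}=(T\pi)^{-n}$. Define $$\psi_n=t^{-|n|/2}\,T_{n\omega}\,\mathcal P_+.$$ *)

theory Defs
  imports "HOL-Analysis.Analysis" "HOL-Library.Poly_Mapping" "HOL-Computational_Algebra.Polynomial"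
begin

text \<open>Laurent polynomials C[X, X^-1] as finitely supported coefficient maps int to complex.
  Parameters: a = q^(1/2) and b = t^(1/2).\<close>

type_synonym lpoly = "int \<Rightarrow>\<^sub>0 complex"

definition lsc :: "complex \<Rightarrow> lpoly \<Rightarrow> lpoly" where
  "lsc c f = (\<Sum>j\<in>Poly_Mapping.keys f. Poly_Mapping.single j (c * Poly_Mapping.lookup f j))"

definition leval :: "lpoly \<Rightarrow> complex \<Rightarrow> complex" where
  "leval f x = (\<Sum>j\<in>Poly_Mapping.keys f. Poly_Mapping.lookup f j * x powi j)"

definition sX :: "lpoly \<Rightarrow> lpoly" where
  "sX f = (\<Sum>j\<in>Poly_Mapping.keys f. Poly_Mapping.single (-j) (Poly_Mapping.lookup f j))"

definition pX :: "complex \<Rightarrow> lpoly \<Rightarrow> lpoly" where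
  "pX a f = (\<Sum>j\<in>Poly_Mapping.keys f. Poly_Mapping.single j (a powi j * Poly_Mapping.lookup f j))"

text \<open>c * (X^-j - X^j) / (X^2 - 1), written out as a Laurent polynomial\<close>
definition dd_mono :: "complex \<Rightarrow> int \<Rightarrow> lpoly" where
  "dd_mono c j =
     (if 0 < j then - (\<Sum>i\<in>{0..<nat j}. Poly_Mapping.single (-j + 2 * int i) c)
      else if j < 0 then (\<Sum>i\<in>{0..<nat (-j)}. Poly_Mapping.single (j + 2 * int i) c)
      else 0)"

text \<open>the divided difference (s - 1) f / (X^2 - 1)\<close>
definition ddX :: "lpoly \<Rightarrow> lpoly" where
  "ddX f = (\<Sum>j\<in>Poly_Mapping.keys f. dd_mono (Poly_Mapping.lookup f j) j)"

definition TX :: "complex \<Rightarrow> lpoly \<Rightarrow> lpoly" where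
  "TX b f = lsc b (sX f) + lsc (b - inverse b) (ddX f)"

definition YX :: "complex \<Rightarrow> complex \<Rightarrow> lpoly \<Rightarrow> lpoly" where
  "YX a b f = sX (pX a (TX b f))"

definition eigE :: "complex \<Rightarrow> complex \<Rightarrow> int \<Rightarrow> complex" where
  "eigE a b n = (if n \<le> 0 then a powi (-n) * b else a powi (-n) * inverse b)"

definition isE :: "complex \<Rightarrow> complex \<Rightarrow> int \<Rightarrow> lpoly \<Rightarrow> bool" where
  "isE a b n E \<longleftrightarrow>
     YX a b E = lsc (eigE a b n) E \<and> Poly_Mapping.lookup E n = 1 \<and>
     (\<forall>j\<in>Poly_Mapping.keys E. j = n \<or> \<bar>j\<bar> < \<bar>n\<bar> \<or> (j = -n \<and> 0 < j))"

definition Emac :: "complex \<Rightarrow> complex \<Rightarrow> int \<Rightarrow> lpoly" where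
  "Emac a b n = (THE E. isE a b n E)"

definition Eratio :: "complex \<Rightarrow> complex \<Rightarrow> int \<Rightarrow> lpoly" where
  "Eratio a b n = lsc (inverse (leval (Emac a b n) (inverse b))) (Emac a b n)"

text \<open>Affine Hecke algebra side: an arbitrary ring 'r which is a complex algebra via a
  ring homomorphism emb with central image.\<close>
definition calg_emb :: "(complex \<Rightarrow> 'r::ring_1) \<Rightarrow> bool" where
  "calg_emb emb \<longleftrightarrow> emb 1 = 1 \<and> (\<forall>x y. emb (x + y) = emb x + emb y) \<and>
     (\<forall>x y. emb (x * y) = emb x * emb y) \<and> (\<forall>c r. emb c * r = r * emb c)"

definition aeval :: "(complex \<Rightarrow> 'r::ring_1) \<Rightarrow> 'r \<Rightarrow> 'r \<Rightarrow> lpoly \<Rightarrow> 'r" where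
  "aeval emb Y Yi e = (\<Sum>j\<in>Poly_Mapping.keys e. emb (Poly_Mapping.lookup e j) * (if 0 \<le> j then Y ^ nat j else Yi ^ nat (-j)))"

definition Pplus :: "(complex \<Rightarrow> 'r::ring_1) \<Rightarrow> complex \<Rightarrow> 'r \<Rightarrow> 'r" where
  "Pplus emb b T = emb (inverse (1 + b\<^sup>2)) * (1 + emb b * T)"

definition Tnw :: "'r::ring_1 \<Rightarrow> 'r \<Rightarrow> int \<Rightarrow> 'r" where
  "Tnw T \<pi> n = (if 0 \<le> n then (\<pi> * T) ^ nat n else (T * \<pi>) ^ nat (-n))"

definition psi :: "(complex \<Rightarrow> 'r::ring_1) \<Rightarrow> complex \<Rightarrow> 'r \<Rightarrow> 'r \<Rightarrow> int \<Rightarrow> 'r" where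
  "psi emb b T \<pi> n = emb (inverse b ^ nat \<bar>n\<bar>) * Tnw T \<pi> n * Pplus emb b T"

end

theory Submission imports Defs begin

abbreviation lk where "lk \<equiv> Poly_Mapping.lookup"
abbreviation ks where "ks \<equiv> Poly_Mapping.keys"


lemma lookup_lsc: "lk (lsc c f) i = c * lk f i"
  unfolding lsc_def lookup_sum lookup_single
  by (cases "i \<in> ks f") (auto simp: when_def in_keys_iff)

lemma lookup_sX: "lk (sX f) i = lk f (-i)"
proof -
  have "lk (sX f) i = (\<Sum>x\<in>ks f. if x = -i then lk f x else 0)"
    unfolding sX_def lookup_sum lookup_single by (intro sum.cong) (auto simp: when_def)
  then show ?thesis by (cases "-i \<in> ks f") (auto simp: in_keys_iff)
qed

lemma lookup_pX: "lk (pX a f) i = a powi i * lk f i"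
  unfolding pX_def lookup_sum lookup_single
  by (cases "i \<in> ks f") (auto simp: when_def in_keys_iff)

definition D :: "int \<Rightarrow> int \<Rightarrow> complex" where
  "D j k = (if 0 < j then (if -j \<le> k \<and> k \<le> j - 2 \<and> even (k + j) then -1 else 0)
            else if j < 0 then (if j \<le> k \<and> k \<le> -j - 2 \<and> even (k + j) then 1 else 0) else 0)"

lemma sum_if_inj: assumes "inj_on g I" "finite I"
  shows "(\<Sum>i\<in>I. (c when g i = k)) = (c when k \<in> g ` I)"
proof (cases "k \<in> g ` I")
  case True
  then obtain i0 where i0: "i0 \<in> I" "g i0 = k" by auto
  have "(\<Sum>i\<in>I. (c when g i = k)) = (\<Sum>i\<in>I. (if i = i0 then c else 0))"
    using assms(1) i0 by (intro sum.cong) (auto simp: when_def inj_on_def)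
  also have "\<dots> = c" using i0 assms(2) by simp
  finally show ?thesis using True by (simp add: when_def)
next
  case False
  then show ?thesis by (auto simp: when_def intro!: sum.neutral)
qed

lemma img1: "0 < j \<Longrightarrow> k \<in> (\<lambda>i. -j + 2 * int i) ` {0..<nat j} \<longleftrightarrow> (-j \<le> k \<and> k \<le> j - 2 \<and> even (k + j))"
proof
  assume "0 < j" "k \<in> (\<lambda>i. -j + 2 * int i) ` {0..<nat j}"
  then show "-j \<le> k \<and> k \<le> j - 2 \<and> even (k + j)" by auto
next
  assume h: "0 < j" "-j \<le> k \<and> k \<le> j - 2 \<and> even (k + j)"
  have "even (k + j)" using h by blast
  then obtain t where t: "k + j = 2 * t" by (rule evenE)
  have "k = -j + 2 * int (nat t)" "nat t \<in> {0..<nat j}" using h t by auto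
  then show "k \<in> (\<lambda>i. -j + 2 * int i) ` {0..<nat j}" by blast
qed

lemma img2: "j < 0 \<Longrightarrow> k \<in> (\<lambda>i. j + 2 * int i) ` {0..<nat (-j)} \<longleftrightarrow> (j \<le> k \<and> k \<le> -j - 2 \<and> even (k + j))"
proof
  assume "j < 0" "k \<in> (\<lambda>i. j + 2 * int i) ` {0..<nat (-j)}"
  then show "j \<le> k \<and> k \<le> -j - 2 \<and> even (k + j)" by auto
next
  assume h: "j < 0" "j \<le> k \<and> k \<le> -j - 2 \<and> even (k + j)"
  have "even (k - j)" using h by simp
  then obtain t where t: "k - j = 2 * t" by (rule evenE)
  have "k = j + 2 * int (nat t)" "nat t \<in> {0..<nat (-j)}" using h t by auto
  then show "k \<in> (\<lambda>i. j + 2 * int i) ` {0..<nat (-j)}" by blast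
qed

lemma lookup_dd_mono: "lk (dd_mono c j) k = c * D j k"
proof -
  have i1: "inj_on (\<lambda>i. -j + 2 * int i) I" for I by (auto simp: inj_on_def)
  have i2: "inj_on (\<lambda>i. j + 2 * int i) I" for I by (auto simp: inj_on_def)
  show ?thesis
  proof (cases "0 < j")
    case True
    show ?thesis unfolding dd_mono_def if_P[OF True] lookup_uminus lookup_sum lookup_single
        sum_if_inj[OF i1 finite_atLeastLessThan] img1[OF True]
      using True by (simp add: D_def when_def)
  next
    case False
    show ?thesis
    proof (cases "j < 0")
      case True
      show ?thesis unfolding dd_mono_def if_not_P[OF False] if_P[OF True] lookup_sum lookup_single
        sum_if_inj[OF i2 finite_atLeastLessThan] img2[OF True]
      using True by (simp add: D_def when_def)
    qed (use False in \<open>simp add: dd_mono_def D_def\<close>)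
  qed
qed

lemma lookup_ddX: "lk (ddX f) k = (\<Sum>j\<in>ks f. lk f j * D j k)"
  unfolding ddX_def lookup_sum lookup_dd_mono ..

lemma lookup_YX: "lk (YX a b f) i =
   a powi (-i) * (b * lk f i + (b - inverse b) * (\<Sum>j\<in>ks f. lk f j * D j (-i)))"
  unfolding YX_def TX_def by (simp add: lookup_sX lookup_pX lookup_add lookup_lsc lookup_ddX)


definition rk :: "int \<Rightarrow> int" where "rk j = (if 0 < j then 2 * j - 1 else - 2 * j)"
definition Al :: "int \<Rightarrow> int set" where "Al n = {j. rk j \<le> rk n}"

lemma Al_sub: "Al n \<subseteq> {-\<bar>n\<bar>..\<bar>n\<bar>}"
  unfolding Al_def rk_def by auto

lemma finite_Al[simp]: "finite (Al n)"
  using Al_sub finite_subset by blast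

lemma n_in_Al[simp]: "n \<in> Al n" unfolding Al_def by simp

lemma rk_inj: "rk i = rk j \<Longrightarrow> i = j"
  unfolding rk_def by (auto split: if_splits; presburger)

lemma allowed_iff: "(j = n \<or> \<bar>j\<bar> < \<bar>n\<bar> \<or> (j = -n \<and> 0 < j)) \<longleftrightarrow> j \<in> Al n"
  unfolding Al_def rk_def by auto

lemma tri: "D j (-i) \<noteq> 0 \<Longrightarrow> i \<noteq> j \<Longrightarrow> rk i < rk j"
  unfolding D_def rk_def by (auto split: if_splits)

lemma diag: "a powi (-i) * (b + (b - inverse b) * D i (-i)) = eigE a b i"
  unfolding D_def eigE_def by auto

lemma row:
  assumes "ks f \<subseteq> S" "finite S" "i \<in> S"
  shows "lk (YX a b f) i = eigE a b i * lk f i + a powi (-i) * (b - inverse b) * (\<Sum>j\<in>S-{i}. lk f j * D j (-i))"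
proof -
  have "(\<Sum>j\<in>ks f. lk f j * D j (-i)) = (\<Sum>j\<in>S. lk f j * D j (-i))"
    using assms by (intro sum.mono_neutral_left) (auto simp: in_keys_iff)
  also have "\<dots> = lk f i * D i (-i) + (\<Sum>j\<in>S-{i}. lk f j * D j (-i))"
    using assms by (simp add: sum.remove)
  finally show ?thesis unfolding lookup_YX diag[of a i b, symmetric] by (simp add: algebra_simps)
qed

definition good :: "complex \<Rightarrow> complex \<Rightarrow> int \<Rightarrow> bool" where
  "good a b n \<longleftrightarrow> a \<noteq> 0 \<and> (\<forall>i\<in>Al n - {n}. eigE a b n \<noteq> eigE a b i)"

definition rho :: "complex \<Rightarrow> complex \<Rightarrow> int \<Rightarrow> int \<Rightarrow> complex" where
  "rho a b n i = a powi (-i) / (eigE a b n - eigE a b i)"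

definition RR :: "complex \<Rightarrow> complex \<Rightarrow> int \<Rightarrow> (int \<Rightarrow> complex) \<Rightarrow> int \<Rightarrow> complex" where
  "RR a b n f i = (b - inverse b) * (\<Sum>j\<in>Al n-{i}. f j * D j (-i)) * rho a b n i"

lemma isE_iff:
  assumes g: "good a b n"
  shows "isE a b n f \<longleftrightarrow> ks f \<subseteq> Al n \<and> lk f n = 1 \<and> (\<forall>i\<in>Al n - {n}. lk f i = RR a b n (lk f) i)"
proof -
  have keq: "(\<forall>j\<in>ks f. j = n \<or> \<bar>j\<bar> < \<bar>n\<bar> \<or> (j = -n \<and> 0 < j)) \<longleftrightarrow> ks f \<subseteq> Al n"
    using allowed_iff by blast
  have rows: "YX a b f = lsc (eigE a b n) f \<longleftrightarrow> (\<forall>i\<in>Al n - {n}. lk f i = RR a b n (lk f) i)"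
    if K: "ks f \<subseteq> Al n"
  proof -
    have out: "lk (YX a b f) i = eigE a b n * lk f i" if "i \<notin> Al n" for i
    proof -
      have "lk f i = 0" using K that by (auto simp: in_keys_iff)
      moreover have "(\<Sum>j\<in>ks f. lk f j * D j (-i)) = 0"
      proof (intro sum.neutral ballI)
        fix j assume j: "j \<in> ks f"
        then have "j \<in> Al n" using K by auto
        show "lk f j * D j (-i) = 0"
        proof (rule ccontr)
          assume "lk f j * D j (-i) \<noteq> 0"
          then have "rk i < rk j" using tri[of j i] \<open>j \<in> Al n\<close> that by auto
          then show False using \<open>j \<in> Al n\<close> that unfolding Al_def by auto
        qed
      qed
      ultimately show ?thesis unfolding lookup_YX by simp
    qed
    have atn: "lk (YX a b f) n = eigE a b n * lk f n"
    proof -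
      have "(\<Sum>j\<in>Al n-{n}. lk f j * D j (-n)) = 0"
      proof (intro sum.neutral ballI)
        fix j assume j: "j \<in> Al n - {n}"
        show "lk f j * D j (-n) = 0"
        proof (rule ccontr)
          assume "lk f j * D j (-n) \<noteq> 0"
          then have "rk n < rk j" using tri[of j n] j by auto
          then show False using j unfolding Al_def by auto
        qed
      qed
      then show ?thesis using row[OF K finite_Al n_in_Al] by simp
    qed
    have inr: "lk (YX a b f) i = eigE a b n * lk f i \<longleftrightarrow> lk f i = RR a b n (lk f) i"
      if i: "i \<in> Al n - {n}" for i
    proof -
      have ne: "eigE a b n - eigE a b i \<noteq> 0" using g i unfolding good_def by auto
      have "lk (YX a b f) i = eigE a b n * lk f i \<longleftrightarrow>
         a powi (-i) * (b - inverse b) * (\<Sum>j\<in>Al n-{i}. lk f j * D j (-i)) = (eigE a b n - eigE a b i) * lk f i"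
        using row[OF K finite_Al, of i a b] i by (auto simp: algebra_simps)
      also have "\<dots> \<longleftrightarrow> lk f i = RR a b n (lk f) i"
        unfolding RR_def rho_def using ne by (auto simp: field_simps)
      finally show ?thesis .
    qed
    show ?thesis
    proof
      assume "YX a b f = lsc (eigE a b n) f"
      then show "\<forall>i\<in>Al n - {n}. lk f i = RR a b n (lk f) i" using inr by (simp add: lookup_lsc)
    next
      assume h: "\<forall>i\<in>Al n - {n}. lk f i = RR a b n (lk f) i"
      show "YX a b f = lsc (eigE a b n) f"
      proof (rule poly_mapping_eqI)
        fix i
        show "lk (YX a b f) i = lk (lsc (eigE a b n) f) i"
          unfolding lookup_lsc using out atn inr h by (cases "i \<in> Al n - {n}") auto
      qed
    qed
  qed
  show ?thesis unfolding isE_def keq using rows by blast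
qed


lemma RR_cong:
  assumes "\<And>j. j \<in> Al n \<Longrightarrow> rk i < rk j \<Longrightarrow> f j = g j"
  shows "RR a b n f i = RR a b n g i"
  unfolding RR_def
proof -
  have "(\<Sum>j\<in>Al n-{i}. f j * D j (-i)) = (\<Sum>j\<in>Al n-{i}. g j * D j (-i))"
  proof (rule sum.cong)
    fix j assume j: "j \<in> Al n - {i}"
    show "f j * D j (-i) = g j * D j (-i)"
      using assms[of j] tri[of j i] j by (cases "D j (-i) = 0") auto
  qed simp
  then show "(b - inverse b) * (\<Sum>j\<in>Al n-{i}. f j * D j (-i)) * rho a b n i =
    (b - inverse b) * (\<Sum>j\<in>Al n-{i}. g j * D j (-i)) * rho a b n i" by simp
qed

lemma isE_unique:
  assumes g: "good a b n" and f1: "isE a b n f" and f2: "isE a b n h"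
  shows "f = h"
proof -
  have F: "ks f \<subseteq> Al n" "lk f n = 1" "\<forall>i\<in>Al n - {n}. lk f i = RR a b n (lk f) i"
    using f1 isE_iff[OF g] by auto
  have H: "ks h \<subseteq> Al n" "lk h n = 1" "\<forall>i\<in>Al n - {n}. lk h i = RR a b n (lk h) i"
    using f2 isE_iff[OF g] by auto
  have "\<forall>i. nat (rk n - rk i) = d \<longrightarrow> lk f i = lk h i" for d
  proof (induction d rule: less_induct)
    case (less d)
    show ?case
    proof (intro allI impI)
      fix i assume di: "nat (rk n - rk i) = d"
      consider "i \<notin> Al n" | "i = n" | "i \<in> Al n - {n}" by blast
      then show "lk f i = lk h i"
      proof cases
        case 1 then show ?thesis using F(1) H(1) by (metis in_keys_iff subsetD)
      next
        case 2 then show ?thesis using F H by simp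
      next
        case 3
        have "RR a b n (lk f) i = RR a b n (lk h) i"
        proof (rule RR_cong)
          fix j assume "j \<in> Al n" "rk i < rk j"
          then have "nat (rk n - rk j) < d" using di 3 unfolding Al_def by auto
          then show "lk f j = lk h j" using less by blast
        qed
        then show ?thesis using F(3) H(3) 3 by simp
      qed
    qed
  qed
  then show ?thesis by (intro poly_mapping_eqI) blast
qed

function cf :: "complex \<Rightarrow> complex \<Rightarrow> int \<Rightarrow> int \<Rightarrow> complex" where
  "cf a b n i = (if i = n then 1 else if rk i < rk n then
     (b - inverse b) * (\<Sum>j\<in>{j. rk i < rk j \<and> rk j \<le> rk n}. cf a b n j * D j (-i)) * rho a b n i
     else 0)"
  by pat_completeness auto
termination by (relation "Wellfounded.measure (\<lambda>(a,b,n,i). nat (rk n - rk i))") auto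

declare cf.simps[simp del]

lemma cf_supp: "cf a b n i \<noteq> 0 \<Longrightarrow> i \<in> Al n"
  by (subst (asm) cf.simps) (auto simp: Al_def split: if_splits)

lemma isE_exists:
  assumes g: "good a b n"
  shows "isE a b n (Abs_poly_mapping (cf a b n))"
proof -
  have fin: "finite {i. cf a b n i \<noteq> 0}"
    using cf_supp by (intro finite_subset[OF _ finite_Al[of n]]) auto
  have lk: "lk (Abs_poly_mapping (cf a b n)) = cf a b n" using fin by simp
  show ?thesis unfolding isE_iff[OF g] lk
  proof (intro conjI ballI)
    show "ks (Abs_poly_mapping (cf a b n)) \<subseteq> Al n" using cf_supp by (auto simp: in_keys_iff lk)
    show "cf a b n n = 1" by (simp add: cf.simps)
  next
    fix i assume i: "i \<in> Al n - {n}"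
    then have lt: "rk i < rk n" using rk_inj unfolding Al_def by force
    have "(\<Sum>j\<in>Al n-{i}. cf a b n j * D j (-i)) = (\<Sum>j\<in>{j. rk i < rk j \<and> rk j \<le> rk n}. cf a b n j * D j (-i))"
    proof (rule sum.mono_neutral_right)
      show "finite (Al n - {i})" by simp
      show "{j. rk i < rk j \<and> rk j \<le> rk n} \<subseteq> Al n - {i}" unfolding Al_def by auto
      show "\<forall>j\<in>Al n - {i} - {j. rk i < rk j \<and> rk j \<le> rk n}. cf a b n j * D j (- i) = 0"
        using tri unfolding Al_def by fastforce
    qed
    then show "cf a b n i = RR a b n (cf a b n) i"
      unfolding RR_def using i lt by (subst cf.simps) simp
  qed
qed

lemma Emac_good: "good a b n \<Longrightarrow> isE a b n (Emac a b n)"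
  unfolding Emac_def by (rule theI[of "isE a b n", OF isE_exists]) (auto intro: isE_unique isE_exists)


definition beta :: "complex \<Rightarrow> int \<Rightarrow> complex" where
  "beta b i = (if i \<le> 0 then b else inverse b)"

lemma eigE_beta: "eigE a b i = a powi (-i) * beta b i"
  unfolding eigE_def beta_def by auto

lemma beta_nz: "b \<noteq> 0 \<Longrightarrow> beta b i \<noteq> 0" unfolding beta_def by auto

lemma eig_diff: "a \<noteq> 0 \<Longrightarrow> eigE a b n - eigE a b i = a powi (-i) * (a powi (i - n) * beta b n - beta b i)"
proof -
  assume a: "a \<noteq> 0"
  have "a powi (-n) = a powi (-i) * a powi (i - n)" using a power_int_add[of a "-i" "i - n"] by simp
  then show ?thesis unfolding eigE_beta by (simp add: algebra_simps)
qed

lemma rho_alt: "a \<noteq> 0 \<Longrightarrow> rho a b n i = 1 / (a powi (i - n) * beta b n - beta b i)"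
  unfolding rho_def using eig_diff[of a b n i] by (simp add: power_int_minus)

lemma Al_neg: "n < 0 \<Longrightarrow> Al n = {n..-n}"
  unfolding Al_def rk_def by auto

lemma Al_lt_pos: "0 \<le> n \<Longrightarrow> i \<in> Al n - {n} \<Longrightarrow> i < n"
  unfolding Al_def rk_def by (auto split: if_splits)

lemma Al_gt_neg: "n < 0 \<Longrightarrow> i \<in> Al n - {n} \<Longrightarrow> n < i"
  using Al_neg by auto

definition rhos :: "complex \<Rightarrow> int \<Rightarrow> int \<Rightarrow> complex" where
  "rhos b n i = (if 0 \<le> n then 0 else - inverse (beta b i))"

definition chat :: "complex \<Rightarrow> int \<Rightarrow> int \<Rightarrow> complex" where
  "chat b n i = (if i = n then 1 else if n < 0 \<and> n < i \<and> i \<le> -n \<and> even (i - n) then 1 - b^2 else 0)"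

lemma lim_x: "((\<lambda>x::real. complex_of_real x) \<longlongrightarrow> 0) (at_right 0)"
  using tendsto_of_real[OF tendsto_ident_at, of 0 "{0<..}"] by simp

lemma lim_pow: "((\<lambda>x::real. complex_of_real x ^ k) \<longlongrightarrow> (if k = 0 then 1 else 0)) (at_right 0)"
  using tendsto_power[OF lim_x, of k] by (simp add: power_0_left)

lemma ev_pos: "eventually (\<lambda>x::real. complex_of_real x \<noteq> 0) (at_right 0)"
  using eventually_at_right_less[of "0::real"] by (auto elim: eventually_mono)

lemma lim_X_pos:
  assumes "0 \<le> n" "i \<in> Al n - {n}" "b \<noteq> 0"
  shows "eventually (\<lambda>x. rho (complex_of_real x) b n i =
      (complex_of_real x) ^ nat (n - i) / (beta b n - (complex_of_real x) ^ nat (n - i) * beta b i)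
      \<and> (beta b n - (complex_of_real x) ^ nat (n - i) * beta b i) \<noteq> 0) (at_right 0)"
    and "((\<lambda>x. (complex_of_real x) ^ nat (n - i) / (beta b n - (complex_of_real x) ^ nat (n - i) * beta b i))
      \<longlongrightarrow> 0) (at_right 0)"
proof -
  have k: "nat (n - i) \<noteq> 0" using Al_lt_pos[OF assms(1,2)] by simp
  have L: "((\<lambda>x. beta b n - (complex_of_real x) ^ nat (n - i) * beta b i) \<longlongrightarrow> beta b n - 0 * beta b i) (at_right 0)"
    using lim_pow[of "nat (n - i)"] k by (intro tendsto_intros) auto
  have E: "eventually (\<lambda>x. beta b n - (complex_of_real x) ^ nat (n - i) * beta b i \<noteq> 0) (at_right 0)"
    using tendsto_imp_eventually_ne[OF L, of 0] beta_nz[OF assms(3)] by simp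
  show "eventually (\<lambda>x. rho (complex_of_real x) b n i =
      (complex_of_real x) ^ nat (n - i) / (beta b n - (complex_of_real x) ^ nat (n - i) * beta b i)
      \<and> (beta b n - (complex_of_real x) ^ nat (n - i) * beta b i) \<noteq> 0) (at_right 0)"
    using E ev_pos
  proof eventually_elim
    case (elim x)
    define a where "a = complex_of_real x"
    have a: "a \<noteq> 0" using elim a_def by simp
    have p: "a powi (i - n) = inverse (a ^ nat (n - i))"
      using Al_lt_pos[OF assms(1,2)] by (simp add: power_int_minus[symmetric] power_int_def power_inverse)
    have "rho a b n i = a ^ nat (n - i) / (beta b n - a ^ nat (n - i) * beta b i)"
      unfolding rho_alt[OF a] p using a by (simp add: field_simps)
    then show ?case using elim a_def by simp
  qed
  show "((\<lambda>x. (complex_of_real x) ^ nat (n - i) / (beta b n - (complex_of_real x) ^ nat (n - i) * beta b i))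
      \<longlongrightarrow> 0) (at_right 0)"
    using tendsto_divide[OF lim_pow[of "nat (n - i)"] L] k beta_nz[OF assms(3)] by simp
qed

lemma lim_X_neg:
  assumes "n < 0" "i \<in> Al n - {n}" "b \<noteq> 0"
  shows "eventually (\<lambda>x. rho (complex_of_real x) b n i =
      1 / ((complex_of_real x) ^ nat (i - n) * beta b n - beta b i)
      \<and> ((complex_of_real x) ^ nat (i - n) * beta b n - beta b i) \<noteq> 0) (at_right 0)"
    and "((\<lambda>x. 1 / ((complex_of_real x) ^ nat (i - n) * beta b n - beta b i))
      \<longlongrightarrow> rhos b n i) (at_right 0)"
proof -
  have k: "nat (i - n) \<noteq> 0" using Al_gt_neg[OF assms(1,2)] by simp
  have L: "((\<lambda>x. (complex_of_real x) ^ nat (i - n) * beta b n - beta b i) \<longlongrightarrow> 0 * beta b n - beta b i) (at_right 0)"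
    using lim_pow[of "nat (i - n)"] k by (intro tendsto_intros) auto
  have E: "eventually (\<lambda>x. (complex_of_real x) ^ nat (i - n) * beta b n - beta b i \<noteq> 0) (at_right 0)"
    using tendsto_imp_eventually_ne[OF L, of 0] beta_nz[OF assms(3)] by simp
  show "eventually (\<lambda>x. rho (complex_of_real x) b n i =
      1 / ((complex_of_real x) ^ nat (i - n) * beta b n - beta b i)
      \<and> ((complex_of_real x) ^ nat (i - n) * beta b n - beta b i) \<noteq> 0) (at_right 0)"
    using E ev_pos
  proof eventually_elim
    case (elim x)
    define a where "a = complex_of_real x"
    have a: "a \<noteq> 0" using elim a_def by simp
    have p: "a powi (i - n) = a ^ nat (i - n)"
      using Al_gt_neg[OF assms(1,2)] by (simp add: power_int_def)
    show ?case unfolding a_def[symmetric] rho_alt[OF a] p using elim a_def by simp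
  qed
  show "((\<lambda>x. 1 / ((complex_of_real x) ^ nat (i - n) * beta b n - beta b i))
      \<longlongrightarrow> rhos b n i) (at_right 0)"
    using tendsto_divide[OF tendsto_const L, of 1] beta_nz[OF assms(3)] assms(1)
    by (simp add: rhos_def divide_inverse)
qed

lemma rho_lim:
  assumes "i \<in> Al n - {n}" "b \<noteq> 0"
  shows "((\<lambda>x. rho (complex_of_real x) b n i) \<longlongrightarrow> rhos b n i) (at_right 0)"
proof (cases "0 \<le> n")
  case True
  show ?thesis using lim_X_pos[OF True assms] unfolding rhos_def using True
    by (subst tendsto_cong[where g = "\<lambda>x. (complex_of_real x) ^ nat (n - i) / (beta b n - (complex_of_real x) ^ nat (n - i) * beta b i)"])
       (auto elim: eventually_mono)
next
  case False
  then have F: "n < 0" by simp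
  show ?thesis using lim_X_neg[OF F assms]
    by (subst tendsto_cong[where g = "\<lambda>x. 1 / ((complex_of_real x) ^ nat (i - n) * beta b n - beta b i)"])
       (auto elim: eventually_mono)
qed

lemma ev_good:
  assumes "b \<noteq> 0"
  shows "eventually (\<lambda>x. good (complex_of_real x) b n) (at_right 0)"
proof -
  have "\<forall>i\<in>Al n - {n}. eventually (\<lambda>x. eigE (complex_of_real x) b n \<noteq> eigE (complex_of_real x) b i) (at_right 0)"
  proof
    fix i assume i: "i \<in> Al n - {n}"
    show "eventually (\<lambda>x. eigE (complex_of_real x) b n \<noteq> eigE (complex_of_real x) b i) (at_right 0)"
    proof (cases "0 \<le> n")
      case True
      show ?thesis using lim_X_pos(1)[OF True i assms] ev_pos
      proof eventually_elim
        case (elim x)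
        define a where "a = complex_of_real x"
        have a: "a \<noteq> 0" using elim a_def by simp
        have p: "a powi (i - n) = inverse (a ^ nat (n - i))"
          using Al_lt_pos[OF True i] by (simp add: power_int_minus[symmetric] power_int_def power_inverse)
        have "a powi (i - n) * beta b n - beta b i = (beta b n - a ^ nat (n - i) * beta b i) / a ^ nat (n - i)"
          unfolding p using a by (simp add: field_simps)
        then have "a powi (i - n) * beta b n - beta b i \<noteq> 0" using elim a_def a by simp
        then show ?case unfolding a_def[symmetric] using eig_diff[OF a, of b n i] a by auto
      qed
    next
      case False
      then have F: "n < 0" by simp
      show ?thesis using lim_X_neg(1)[OF F i assms] ev_pos
      proof eventually_elim
        case (elim x)
        define a where "a = complex_of_real x"
        have a: "a \<noteq> 0" using elim a_def by simp
        have p: "a powi (i - n) = a ^ nat (i - n)"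
          using Al_gt_neg[OF F i] by (simp add: power_int_def)
        then have "a powi (i - n) * beta b n - beta b i \<noteq> 0" using elim a_def by simp
        then show ?case unfolding a_def[symmetric] using eig_diff[OF a, of b n i] a by auto
      qed
    qed
  qed
  then have "eventually (\<lambda>x. \<forall>i\<in>Al n - {n}. eigE (complex_of_real x) b n \<noteq> eigE (complex_of_real x) b i) (at_right 0)"
    by (intro eventually_ball_finite) auto
  then show ?thesis using ev_pos unfolding good_def by (auto elim: eventually_elim2)
qed


lemma D_neg: "D (-j) k = - D j k"
  unfolding D_def by auto

lemma sum_odd_zero:
  assumes "\<And>j. g (-j) = - g j"
  shows "(\<Sum>j\<in>{-k..k::int}. g j) = (0::complex)"
proof -
  have "(\<Sum>j\<in>{-k..k}. g j) = (\<Sum>j\<in>uminus ` {-k..k}. g j)" by simp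
  also have "\<dots> = (\<Sum>j\<in>{-k..k}. g (-j))" by (subst sum.reindex) (auto simp: inj_on_def)
  also have "\<dots> = - (\<Sum>j\<in>{-k..k}. g j)" by (simp add: assms sum_negf)
  finally show ?thesis by simp
qed

lemma S1:
  assumes n: "n < 0" and i: "n < i" "i \<le> -n"
  shows "(\<Sum>j\<in>{n..-n}-{i}. chat b n j * D j (-i)) = (if even (i - n) then (if 0 < i then 1 else b^2) else 0)"
proof -
  define g where "g j = (if even (j - n) then D j (-i) else 0)" for j
  have Dn: "D n (-i) = (if even (i - n) then 1 else 0)"
  proof -
    have "even (i - n) \<Longrightarrow> n + 2 \<le> i" using i by presburger
    moreover have "even (-i + n) = even (i - n)" by presburger
    ultimately show ?thesis unfolding D_def using n i by auto
  qed
  have set1: "{n..-n}-{i} = insert n ({n<..-n}-{i})" using i by auto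
  have "(\<Sum>j\<in>{n..-n}-{i}. chat b n j * D j (-i)) = chat b n n * D n (-i) + (\<Sum>j\<in>{n<..-n}-{i}. chat b n j * D j (-i))"
    unfolding set1 by (subst sum.insert) auto
  also have "(\<Sum>j\<in>{n<..-n}-{i}. chat b n j * D j (-i)) = (\<Sum>j\<in>{n<..-n}-{i}. (1 - b^2) * g j)"
    by (intro sum.cong) (auto simp: chat_def g_def n)
  also have "\<dots> = (1 - b^2) * ((\<Sum>j\<in>{n<..-n}. g j) - g i)"
    using i by (simp add: sum_distrib_left[symmetric] sum_diff1)
  also have "(\<Sum>j\<in>{n<..-n}. g j) = g (-n) + (\<Sum>j\<in>{-(-n-1)..(-n-1)}. g j)"
  proof -
    have "{n<..-n} = insert (-n) {-(-n-1)..(-n-1)}" using n by auto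
    then show ?thesis by simp
  qed
  also have "(\<Sum>j\<in>{-(-n-1)..(-n-1)}. g j) = 0"
  proof (rule sum_odd_zero)
    fix j
    have "even (-j - n) = even (j - n)" by presburger
    then show "g (-j) = - g j" unfolding g_def by (simp add: D_neg)
  qed
  also have "g (-n) = - (if even (i - n) then 1 else 0)" unfolding g_def using Dn D_neg[of n "-i"] by simp
  also have "g i = (if even (i - n) \<and> 0 < i then -1 else 0)" unfolding g_def D_def by auto
  finally show ?thesis using Dn by (auto simp: chat_def algebra_simps)
qed

lemma ID:
  assumes i: "i \<in> Al n - {n}" and b: "b \<noteq> 0"
  shows "chat b n i = (b - inverse b) * (\<Sum>j\<in>Al n-{i}. chat b n j * D j (-i)) * rhos b n i"
proof (cases "0 \<le> n")
  case True
  then show ?thesis using i by (simp add: rhos_def chat_def)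
next
  case False
  then have n: "n < 0" by simp
  have ii: "n < i" "i \<le> -n" using i Al_neg[OF n] by auto
  show ?thesis unfolding Al_neg[OF n] S1[OF n ii] using n ii b
    by (auto simp: rhos_def chat_def beta_def field_simps power2_eq_square)
qed

lemma chat_out: "i \<notin> Al n \<Longrightarrow> chat b n i = 0"
  unfolding chat_def using Al_neg by auto

lemma coeff_lim:
  assumes b: "b \<noteq> 0"
  shows "((\<lambda>x. lk (Emac (complex_of_real x) b n) i) \<longlongrightarrow> chat b n i) (at_right 0)"
proof -
  define G where "G x = Emac (complex_of_real x) b n" for x
  have EV: "eventually (\<lambda>x. ks (G x) \<subseteq> Al n \<and> lk (G x) n = 1 \<and>
      (\<forall>i\<in>Al n - {n}. lk (G x) i = RR (complex_of_real x) b n (lk (G x)) i)) (at_right 0)"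
    using ev_good[OF b, of n]
  proof eventually_elim
    case (elim x)
    show ?case using Emac_good[OF elim] isE_iff[OF elim] unfolding G_def by blast
  qed
  have "\<forall>i. nat (rk n - rk i) = d \<longrightarrow> ((\<lambda>x. lk (G x) i) \<longlongrightarrow> chat b n i) (at_right 0)" for d
  proof (induction d rule: less_induct)
    case (less d)
    show ?case
    proof (intro allI impI)
      fix i assume di: "nat (rk n - rk i) = d"
      consider "i \<notin> Al n" | "i = n" | "i \<in> Al n - {n}" by blast
      then show "((\<lambda>x. lk (G x) i) \<longlongrightarrow> chat b n i) (at_right 0)"
      proof cases
        case 1
        have e1: "eventually (\<lambda>x. lk (G x) i = 0) (at_right 0)"
          using EV by eventually_elim (use 1 in \<open>metis in_keys_iff subsetD\<close>)
        show ?thesis using chat_out[OF 1] tendsto_cong[OF e1, of "chat b n i"] by simp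
      next
        case 2
        have e1: "eventually (\<lambda>x. lk (G x) i = 1) (at_right 0)"
          using EV by eventually_elim (use 2 in simp)
        show ?thesis using 2 tendsto_cong[OF e1, of "chat b n i"] by (simp add: chat_def)
      next
        case 3
        have e: "eventually (\<lambda>x. lk (G x) i = (b - inverse b) * (\<Sum>j\<in>Al n-{i}. lk (G x) j * D j (-i)) * rho (complex_of_real x) b n i) (at_right 0)"
          using EV by eventually_elim (use 3 in \<open>simp add: RR_def\<close>)
        have "((\<lambda>x. (b - inverse b) * (\<Sum>j\<in>Al n-{i}. lk (G x) j * D j (-i)) * rho (complex_of_real x) b n i)
            \<longlongrightarrow> (b - inverse b) * (\<Sum>j\<in>Al n-{i}. chat b n j * D j (-i)) * rhos b n i) (at_right 0)"
        proof (rule tendsto_mult[OF tendsto_mult[OF tendsto_const] rho_lim[OF 3 b]], rule tendsto_sum)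
          fix j assume j: "j \<in> Al n - {i}"
          show "((\<lambda>x. lk (G x) j * D j (-i)) \<longlongrightarrow> chat b n j * D j (-i)) (at_right 0)"
          proof (cases "D j (-i) = 0")
            case False
            then have "rk i < rk j" using tri[of j i] j by auto
            then have "nat (rk n - rk j) < d" using di 3 j unfolding Al_def by auto
            then have "((\<lambda>x. lk (G x) j) \<longlongrightarrow> chat b n j) (at_right 0)" using less by blast
            then show ?thesis by (rule tendsto_mult[OF _ tendsto_const])
          qed simp
        qed
        then show ?thesis using ID[OF 3 b] tendsto_cong[OF e] by simp
      qed
    qed
  qed
  then show ?thesis unfolding G_def by blast
qed

lemma leval_sum: "ks f \<subseteq> S \<Longrightarrow> finite S \<Longrightarrow> leval f x = (\<Sum>j\<in>S. lk f j * x powi j)"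
  unfolding leval_def by (intro sum.mono_neutral_left) (auto simp: in_keys_iff)


lemma reidx:
  fixes h :: "int \<Rightarrow> 'a::comm_monoid_add"
  shows "(\<Sum>j\<in>{-int m<..int m}. if even (j + int m) then h j else 0) = (\<Sum>t<m. h (int m - 2 * int t))"
proof -
  have inj: "inj_on (\<lambda>t. int m - 2 * int t) {..<m}" by (auto simp: inj_on_def)
  have "(\<Sum>t<m. h (int m - 2 * int t)) = (\<Sum>j\<in>(\<lambda>t. int m - 2 * int t) ` {..<m}. h j)"
    by (subst sum.reindex[OF inj]) simp
  also have "\<dots> = (\<Sum>j\<in>{-int m<..int m}. if even (j + int m) then h j else 0)"
  proof (rule sum.mono_neutral_cong_left)
    show "(\<lambda>t. int m - 2 * int t) ` {..<m} \<subseteq> {-int m<..int m}" by auto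
    show "\<forall>j\<in>{-int m<..int m} - (\<lambda>t. int m - 2 * int t) ` {..<m}. (if even (j + int m) then h j else 0) = 0"
    proof
      fix j assume j: "j \<in> {-int m<..int m} - (\<lambda>t. int m - 2 * int t) ` {..<m}"
      show "(if even (j + int m) then h j else 0) = 0"
      proof (rule ccontr)
        assume "(if even (j + int m) then h j else 0) \<noteq> 0"
        then have e: "even (j + int m)" by (auto split: if_splits)
        then have "even (int m - j)" by presburger
        then obtain t where t: "int m - j = 2 * t" by (rule evenE)
        have "nat t < m" "j = int m - 2 * int (nat t)" using t j by auto
        then show False using j by blast
      qed
    qed
  qed (auto simp: even_add)
  finally show ?thesis by simp
qed

lemma vsum: assumes b: "b \<noteq> 0" shows "(\<Sum>j\<in>Al n. chat b n j * inverse b powi j) = b powi (-\<bar>n\<bar>)"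
proof (cases "0 \<le> n")
  case True
  then have n0: "0 \<le> n" .
  have "(\<Sum>j\<in>Al n. chat b n j * inverse b powi j) = (\<Sum>j\<in>Al n. if j = n then inverse b powi j else 0)"
    by (intro sum.cong) (use n0 in \<open>auto simp: chat_def\<close>)
  also have "\<dots> = inverse b powi n" by simp
  finally show ?thesis using True by (simp add: power_int_inverse power_int_minus)
next
  case False
  then have n: "n < 0" by simp
  define m where "m = nat (-n)"
  have nm: "n = - int m" using n m_def by simp
  have set1: "{n..-n} = insert n {n<..-n}" using n by auto
  have "(\<Sum>j\<in>Al n. chat b n j * inverse b powi j) = b ^ m + (\<Sum>j\<in>{-int m<..int m}. if even (j + int m) then (1 - b^2) * inverse b powi j else 0)"
  proof -
    have A: "chat b n n * inverse b powi n = b ^ m" by (simp add: chat_def nm power_int_minus power_inverse)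
    have B: "(\<Sum>j\<in>{n<..-n}. chat b n j * inverse b powi j) = (\<Sum>j\<in>{-int m<..int m}. if even (j + int m) then (1 - b^2) * inverse b powi j else 0)"
      by (intro sum.cong) (auto simp: chat_def nm)
    show ?thesis unfolding Al_neg[OF n] set1 using n A B by (subst sum.insert) auto
  qed
  also have "(\<Sum>j\<in>{-int m<..int m}. if even (j + int m) then (1 - b^2) * inverse b powi j else 0)
     = (\<Sum>t<m. (1 - b^2) * inverse b powi (int m - 2 * int t))" by (rule reidx)
  also have "\<dots> = (\<Sum>t<m. (1 - b^2) * (inverse (b ^ m) * (b^2) ^ t))"
  proof (rule sum.cong)
    fix t assume t: "t \<in> {..<m}"
    have "inverse b powi (int m - 2 * int t) = b powi (2 * int t - int m)"
      by (simp add: power_int_inverse power_int_minus[symmetric])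
    also have "\<dots> = b powi (int (2 * t)) * b powi (- int m)" using b by (subst power_int_add[symmetric]) auto
    also have "\<dots> = inverse (b ^ m) * (b^2) ^ t" unfolding power_int_of_nat power_int_minus power_int_of_nat
      by (simp add: power_mult)
    finally show "(1 - b^2) * inverse b powi (int m - 2 * int t) = (1 - b^2) * (inverse (b ^ m) * (b^2) ^ t)" by simp
  qed simp
  also have "\<dots> = inverse (b ^ m) * ((1 - b^2) * (\<Sum>t<m. (b^2) ^ t))"
    by (simp add: sum_distrib_left algebra_simps)
  also have "\<dots> = inverse (b ^ m) * (1 - (b^2)^m)" by (simp add: one_diff_power_eq)
  finally have "(\<Sum>j\<in>Al n. chat b n j * inverse b powi j) = b ^ m + inverse (b ^ m) * (1 - (b^2)^m)" .
  also have "\<dots> = inverse (b ^ m)"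
  proof -
    have p: "(b^2)^m = b^m * b^m" by (simp add: power2_eq_square power_mult_distrib)
    have nz: "b ^ m \<noteq> 0" using b by simp
    have "inverse (b ^ m) * (1 - b^m * b^m) = inverse (b ^ m) - b ^ m"
      using nz by (simp add: right_diff_distrib mult.assoc[symmetric])
    then show ?thesis unfolding p by simp
  qed
  finally show ?thesis using nm by (simp add: power_int_minus)
qed

lemma Eratio_lim:
  assumes b: "b \<noteq> 0"
  shows "((\<lambda>x. lk (Eratio (complex_of_real x) b n) j) \<longlongrightarrow> b powi \<bar>n\<bar> * chat b n j) (at_right 0)"
proof -
  define G where "G x = Emac (complex_of_real x) b n" for x
  have EV: "eventually (\<lambda>x. ks (G x) \<subseteq> Al n) (at_right 0)"
    using ev_good[OF b, of n]
  proof eventually_elim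
    case (elim x)
    show ?case using Emac_good[OF elim] isE_iff[OF elim] unfolding G_def by blast
  qed
  have e2: "eventually (\<lambda>x. leval (G x) (inverse b) = (\<Sum>j\<in>Al n. lk (G x) j * inverse b powi j)) (at_right 0)"
    using EV by eventually_elim (simp add: leval_sum)
  have L: "((\<lambda>x. \<Sum>j\<in>Al n. lk (G x) j * inverse b powi j) \<longlongrightarrow> b powi (-\<bar>n\<bar>)) (at_right 0)"
    unfolding vsum[OF b, symmetric] G_def
    by (rule tendsto_sum, rule tendsto_mult[OF coeff_lim[OF b] tendsto_const])
  then have L2: "((\<lambda>x. leval (G x) (inverse b)) \<longlongrightarrow> b powi (-\<bar>n\<bar>)) (at_right 0)"
    using tendsto_cong[OF e2] by simp
  have nz: "b powi (-\<bar>n\<bar>) \<noteq> 0" using b by simp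
  have "((\<lambda>x. inverse (leval (G x) (inverse b)) * lk (G x) j) \<longlongrightarrow> inverse (b powi (-\<bar>n\<bar>)) * chat b n j) (at_right 0)"
  proof (rule tendsto_mult[OF tendsto_inverse[OF L2 nz]])
    show "((\<lambda>x. lk (G x) j) \<longlongrightarrow> chat b n j) (at_right 0)" unfolding G_def by (rule coeff_lim[OF b])
  qed
  then show ?thesis unfolding Eratio_def G_def lookup_lsc by (simp add: power_int_minus)
qed


locale ahaL =
  fixes emb :: "complex \<Rightarrow> 'r::ring_1" and b :: complex and T \<pi> Yi :: 'r
  assumes b: "b \<noteq> 0" and E: "calg_emb emb" and pi2: "\<pi> * \<pi> = 1"
    and Tq: "(T - emb b) * (T + emb (inverse b)) = 0"
    and Y1: "(\<pi> * T) * Yi = 1" and Y2: "Yi * (\<pi> * T) = 1"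
begin

lemma emb1: "emb 1 = 1" using E unfolding calg_emb_def by blast
lemma emb_add: "emb (x + y) = emb x + emb y" using E unfolding calg_emb_def by blast
lemma emb_mult: "emb (x * y) = emb x * emb y" using E unfolding calg_emb_def by blast
lemma emb_comm: "emb c * r = r * emb c" using E unfolding calg_emb_def by blast
lemma emb0: "emb 0 = 0" using emb_add[of 0 0] by simp
lemma emb_uminus: "emb (- x) = - emb x" using emb_add[of x "-x"] emb0 minus_unique[of "emb x" "emb (-x)"] by simp
lemma emb_diff: "emb (x - y) = emb x - emb y" using emb_add[of x "-y"] emb_uminus by simp

definition c where "c = b - inverse b"
definition Y where "Y = \<pi> * T"
definition Ti where "Ti = T - emb c"
definition P where "P = Pplus emb b T"

lemma binv: "emb b * emb (inverse b) = 1" using b emb_mult[of b "inverse b"] emb1 by simp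

lemma T2: "T * T = emb c * T + 1"
proof -
  have "0 = (T - emb b) * (T + emb (inverse b))" using Tq by simp
  also have "\<dots> = T * T + T * emb (inverse b) - emb b * T - emb b * emb (inverse b)"
    by (simp add: algebra_simps)
  also have "\<dots> = T * T - (emb c * T + 1)"
    unfolding binv c_def emb_diff emb_comm[of "inverse b" T, symmetric] by (simp add: algebra_simps)
  finally show ?thesis by (metis right_minus_eq)
qed

lemma TTi: "T * Ti = 1" unfolding Ti_def using T2 emb_comm[of c T, symmetric] by (simp add: algebra_simps)
lemma TiT: "Ti * T = 1" unfolding Ti_def using T2 by (simp add: algebra_simps)

lemma TP: "T * P = emb b * P"
proof -
  define k where "k = inverse (1 + b\<^sup>2)"
  have bc: "emb b * emb c = emb b * emb b - 1"
    unfolding emb_mult[symmetric] emb1[symmetric] emb_diff[symmetric] c_def using b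
    by (simp add: algebra_simps power2_eq_square)
  have P: "P = emb k * (1 + emb b * T)" unfolding P_def Pplus_def k_def ..
  have "T * (1 + emb b * T) = T + emb b * (T * T)"
    by (simp add: distrib_left mult.assoc[symmetric] emb_comm[of b T, symmetric])
  also have "\<dots> = T + (emb b * emb c) * T + emb b" unfolding T2 by (simp add: distrib_left mult.assoc)
  also have "\<dots> = emb b * (1 + emb b * T)" unfolding bc by (simp add: algebra_simps)
  finally have 1: "T * (1 + emb b * T) = emb b * (1 + emb b * T)" .
  have "T * P = (T * emb k) * (1 + emb b * T)" unfolding P by (simp add: mult.assoc)
  also have "T * emb k = emb k * T" by (rule emb_comm[symmetric])
  also have "emb k * T * (1 + emb b * T) = emb k * emb b * (1 + emb b * T)" by (simp add: mult.assoc 1)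
  also have "emb k * emb b = emb b * emb k" by (rule emb_comm)
  finally show ?thesis unfolding P by (simp add: mult.assoc)
qed

lemma TiP: "Ti * P = emb (inverse b) * P"
proof -
  have "P = Ti * (T * P)" by (simp add: mult.assoc[symmetric] TiT)
  also have "\<dots> = (Ti * emb b) * P" unfolding TP by (simp add: mult.assoc)
  also have "Ti * emb b = emb b * Ti" by (rule emb_comm[symmetric])
  finally have "emb (inverse b) * P = emb (inverse b) * emb b * (Ti * P)" by (metis mult.assoc)
  also have "emb (inverse b) * emb b = 1" using binv emb_comm by metis
  finally show ?thesis by simp
qed

lemma Yi_eq: "Yi = Ti * \<pi>"
proof -
  have "Y * (Ti * \<pi>) = 1" unfolding Y_def by (simp add: mult.assoc[symmetric]) (simp add: mult.assoc TTi pi2)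
  then have "Yi * (Y * (Ti * \<pi>)) = Yi" by simp
  then show ?thesis using Y2 unfolding Y_def by (simp add: mult.assoc[symmetric])
qed

lemma TY: "T * Y = Yi * T + emb c * Y"
proof -
  have "Yi * T = Ti * Y" unfolding Yi_eq Y_def by (simp add: mult.assoc)
  moreover have "T = Ti + emb c" unfolding Ti_def by simp
  ultimately show ?thesis by (metis distrib_right)
qed

definition Yp :: "int \<Rightarrow> 'r" where "Yp j = (if 0 \<le> j then Y ^ nat j else Yi ^ nat (-j))"

lemma YiY: "Yi * Y = 1" using Y2 unfolding Y_def .

lemma Yp_Y: "Yp j * Y = Yp (j + 1)"
proof (cases "0 \<le> j")
  case True
  then show ?thesis unfolding Yp_def by (simp add: power_Suc2[symmetric] nat_add_distrib)
next
  case False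
  then obtain k where k: "nat (-j) = Suc k" by (cases "nat (-j)") auto
  have "Yi ^ Suc k * Y = Yi ^ k" unfolding power_Suc2 mult.assoc YiY by simp
  moreover have "nat (-(j+1)) = k" using k by simp
  moreover have "j + 1 = 0 \<Longrightarrow> k = 0" using k by simp
  ultimately show ?thesis using False k unfolding Yp_def by auto
qed

lemma Yi_pow: "Yi ^ m = Yp (- int m)" unfolding Yp_def by (cases m) (auto simp: nat_add_distrib)

definition G where "G m = (\<Sum>t<m. Yp (int m - 2 * int t))"

lemma G_Suc: "G (Suc m) = G m * Y + Yi ^ m * Y"
proof -
  have "G m * Y = (\<Sum>t<m. Yp (int (Suc m) - 2 * int t))"
    unfolding G_def sum_distrib_right Yp_Y by (simp add: algebra_simps)
  moreover have "Yi ^ m * Y = Yp (int (Suc m) - 2 * int m)" unfolding Yi_pow Yp_Y by simp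
  ultimately show ?thesis unfolding G_def by simp
qed

lemma TYm: "T * Y ^ m = Yi ^ m * T + emb c * G m"
proof (induction m)
  case 0
  then show ?case by (simp add: G_def)
next
  case (Suc m)
  have "T * Y ^ Suc m = (T * Y ^ m) * Y" by (simp only: power_Suc2 mult.assoc)
  also have "\<dots> = Yi ^ m * (T * Y) + emb c * (G m * Y)" unfolding Suc by (simp add: algebra_simps)
  also have "\<dots> = Yi ^ Suc m * T + emb c * (Yi ^ m * Y + G m * Y)"
    unfolding TY by (simp add: distrib_left distrib_right mult.assoc[symmetric] power_commutes emb_comm[of c "Yi ^ m", symmetric] add.assoc)
  finally show ?case unfolding G_Suc by (simp add: algebra_simps)
qed

lemma Tpi: "(T * \<pi>) ^ m = T * Y ^ m * Ti"
proof (induction m)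
  case 0
  then show ?case by (simp add: TTi)
next
  case (Suc m)
  have "(T * \<pi>) ^ Suc m = T * Y ^ m * (Ti * T) * \<pi>" unfolding power_Suc2 Suc by (simp add: mult.assoc)
  also have "\<dots> = T * Y ^ Suc m * Ti" unfolding TiT power_Suc2 Y_def by (simp add: mult.assoc TTi)
  finally show ?case .
qed

lemma psi_neg: "0 < m \<Longrightarrow> (T * \<pi>) ^ m * P = emb (inverse b) * (emb b * (Yi ^ m * P) + emb c * (G m * P))"
proof -
  have "(T * \<pi>) ^ m * P = T * Y ^ m * (Ti * P)" unfolding Tpi by (simp add: mult.assoc)
  also have "\<dots> = (T * Y ^ m * emb (inverse b)) * P" unfolding TiP by (simp add: mult.assoc)
  also have "T * Y ^ m * emb (inverse b) = emb (inverse b) * (T * Y ^ m)" by (rule emb_comm[symmetric])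
  also have "emb (inverse b) * (T * Y ^ m) * P = emb (inverse b) * ((T * Y ^ m) * P)" by (simp add: mult.assoc)
  also have "(T * Y ^ m) * P = Yi ^ m * (T * P) + emb c * (G m * P)" unfolding TYm by (simp add: algebra_simps)
  also have "Yi ^ m * (T * P) = (Yi ^ m * emb b) * P" unfolding TP by (simp add: mult.assoc)
  also have "Yi ^ m * emb b = emb b * Yi ^ m" by (rule emb_comm[symmetric])
  also have "emb b * Yi ^ m * P = emb b * (Yi ^ m * P)" by (simp add: mult.assoc)
  finally show ?thesis .
qed

lemma aeval_sum: "ks f \<subseteq> S \<Longrightarrow> finite S \<Longrightarrow>
   aeval emb (\<pi> * T) Yi f = (\<Sum>j\<in>S. emb (lk f j) * Yp j)"
  unfolding aeval_def Yp_def Y_def by (intro sum.mono_neutral_left) (auto simp: in_keys_iff emb0)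

end



definition Pc :: "int \<Rightarrow> int \<Rightarrow> complex poly" where
  "Pc n j = (if j = n then monom 1 (nat \<bar>n\<bar>) else if n < 0 \<and> n < j \<and> j \<le> -n \<and> even (j - n)
      then monom 1 (nat (-n)) - monom 1 (nat (-n) + 2) else 0)"

lemma Pc_supp: "Pc n j \<noteq> 0 \<Longrightarrow> j \<in> Al n"
  unfolding Pc_def using Al_neg[of n] by (auto split: if_splits)

lemma finite_Pc: "finite {j. Pc n j \<noteq> 0}"
  using Pc_supp by (intro finite_subset[OF _ finite_Al[of n]]) auto

definition ee :: "int \<Rightarrow> complex \<Rightarrow> lpoly" where
  "ee n x = Abs_poly_mapping (\<lambda>j. poly (Pc n j) x)"

lemma lookup_ee: "lk (ee n x) = (\<lambda>j. poly (Pc n j) x)"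
proof -
  have "finite {j. poly (Pc n j) x \<noteq> 0}"
    by (rule finite_subset[OF _ finite_Pc[of n]]) auto
  then show ?thesis unfolding ee_def by simp
qed

lemma keys_ee: "ks (ee n x) \<subseteq> Al n"
  using Pc_supp by (auto simp: in_keys_iff lookup_ee) (metis poly_0)

lemma poly_Pc: "poly (Pc n j) b = b powi \<bar>n\<bar> * chat b n j"
proof -
  have p: "b powi \<bar>n\<bar> = b ^ nat \<bar>n\<bar>" by (simp add: power_int_def)
  show ?thesis unfolding p Pc_def chat_def
    by (auto simp: poly_monom algebra_simps power_add power2_eq_square)
qed

lemma sqrt_at_right: "filterlim sqrt (at_right 0) (at_right (0::real))"
  unfolding filterlim_at
proof
  show "eventually (\<lambda>x. sqrt x \<in> {0<..} \<and> sqrt x \<noteq> 0) (at_right (0::real))"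
    using eventually_at_right_less[of "0::real"] by (auto elim: eventually_mono)
  show "(sqrt \<longlongrightarrow> 0) (at_right (0::real))"
    using tendsto_real_sqrt[OF tendsto_ident_at, of 0 "{0<..}"] by simp
qed

context ahaL
begin

lemma aha_main: "aeval emb (\<pi> * T) Yi (ee n (inverse b)) * P = psi emb b T \<pi> n"
proof (cases "0 \<le> n")
  case True
  then have n0: "0 \<le> n" .
  have "aeval emb (\<pi> * T) Yi (ee n (inverse b)) = (\<Sum>j\<in>Al n. emb (lk (ee n (inverse b)) j) * Yp j)"
    by (rule aeval_sum[OF keys_ee finite_Al])
  also have "\<dots> = (\<Sum>j\<in>Al n. if j = n then emb (inverse b ^ nat n) * Yp n else 0)"
    by (intro sum.cong) (use n0 in \<open>auto simp: lookup_ee Pc_def poly_monom emb0\<close>)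
  also have "\<dots> = emb (inverse b ^ nat n) * Y ^ nat n" using n0 by (simp add: Yp_def)
  finally show ?thesis using n0 unfolding psi_def Tnw_def P_def Y_def by (simp add: mult.assoc)
next
  case False
  then have n: "n < 0" by simp
  define m where "m = nat (-n)"
  have nm: "n = - int m" and m0: "0 < m" using n m_def by auto
  define bi where "bi = inverse b"
  have set1: "{n..-n} = insert n {n<..-n}" using n by auto
  have "aeval emb (\<pi> * T) Yi (ee n (inverse b)) = (\<Sum>j\<in>Al n. emb (lk (ee n (inverse b)) j) * Yp j)"
    by (rule aeval_sum[OF keys_ee finite_Al])
  also have "\<dots> = emb (bi ^ m) * Yi ^ m +
      (\<Sum>j\<in>{-int m<..int m}. if even (j + int m) then emb (bi ^ m - bi ^ (m + 2)) * Yp j else 0)"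
  proof -
    have A: "emb (lk (ee n (inverse b)) n) * Yp n = emb (bi ^ m) * Yi ^ m"
      by (simp add: lookup_ee Pc_def poly_monom bi_def nm Yp_def)
    have B: "(\<Sum>j\<in>{n<..-n}. emb (lk (ee n (inverse b)) j) * Yp j) =
       (\<Sum>j\<in>{-int m<..int m}. if even (j + int m) then emb (bi ^ m - bi ^ (m + 2)) * Yp j else 0)"
      by (intro sum.cong) (auto simp: lookup_ee Pc_def poly_monom bi_def nm emb0)
    show ?thesis unfolding Al_neg[OF n] set1 using A B by (subst sum.insert) auto
  qed
  also have "(\<Sum>j\<in>{-int m<..int m}. if even (j + int m) then emb (bi ^ m - bi ^ (m + 2)) * Yp j else 0)
     = (\<Sum>t<m. emb (bi ^ m - bi ^ (m + 2)) * Yp (int m - 2 * int t))" by (rule reidx)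
  also have "\<dots> = emb (bi ^ m - bi ^ (m + 2)) * G m" unfolding G_def by (simp add: sum_distrib_left)
  finally have AE: "aeval emb (\<pi> * T) Yi (ee n (inverse b)) * P =
      emb (bi ^ m) * (Yi ^ m * P) + emb (bi ^ m - bi ^ (m + 2)) * (G m * P)"
    by (simp add: distrib_right mult.assoc)
  have "psi emb b T \<pi> n = emb (bi ^ m) * ((T * \<pi>) ^ m * P)"
    unfolding psi_def Tnw_def P_def using n by (simp add: m_def bi_def mult.assoc)
  also have "\<dots> = emb (bi ^ m) * (emb bi * (emb b * (Yi ^ m * P) + emb c * (G m * P)))"
    unfolding psi_neg[OF m0] bi_def ..
  also have "\<dots> = emb (bi ^ m * bi * b) * (Yi ^ m * P) + emb (bi ^ m * bi * c) * (G m * P)"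
    by (simp add: emb_mult distrib_left mult.assoc)
  also have "bi ^ m * bi * b = bi ^ m" using b by (simp add: bi_def)
  also have "bi ^ m * bi * c = bi ^ m - bi ^ (m + 2)" using b
    by (simp add: bi_def c_def algebra_simps power_add power2_eq_square)
  finally show ?thesis using AE by simp
qed

end

theorem theorem7p1:
  fixes n :: int
  shows "\<exists>e :: complex \<Rightarrow> lpoly.
    (\<forall>b. \<not> algebraic b \<longrightarrow>
       (\<forall>j. ((\<lambda>q::real. Poly_Mapping.lookup (Eratio (complex_of_real (sqrt q)) b n) j)
               \<longlongrightarrow> Poly_Mapping.lookup (e b) j) (at_right 0)))
  \<and> (\<exists>P Q :: int \<Rightarrow> complex poly. finite {j. P j \<noteq> 0} \<and>
       (\<forall>b. \<not> algebraic b \<longrightarrow>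
          (\<forall>j. poly (Q j) b \<noteq> 0 \<and> Poly_Mapping.lookup (e b) j = poly (P j) b / poly (Q j) b)))
  \<and> (\<forall>b (emb :: complex \<Rightarrow> 'r::ring_1) T \<pi> Yi.
       \<not> algebraic b \<and> calg_emb emb \<and> \<pi> * \<pi> = 1 \<and>
       (T - emb b) * (T + emb (inverse b)) = 0 \<and>
       (\<pi> * T) * Yi = 1 \<and> Yi * (\<pi> * T) = 1 \<longrightarrow>
       aeval emb (\<pi> * T) Yi (e (inverse b)) * Pplus emb b T = psi emb b T \<pi> n)"
proof (intro exI[of _ "ee n"] conjI allI impI)
  fix b :: complex and j :: int
  assume "\<not> algebraic b"
  then have b: "b \<noteq> 0" by auto
  have "((\<lambda>x. lk (Eratio (complex_of_real x) b n) j) \<longlongrightarrow> lk (ee n b) j) (at_right 0)"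
    using Eratio_lim[OF b, of n j] by (simp add: lookup_ee poly_Pc)
  then show "((\<lambda>q::real. lk (Eratio (complex_of_real (sqrt q)) b n) j) \<longlongrightarrow> lk (ee n b) j) (at_right 0)"
    by (rule filterlim_compose[OF _ sqrt_at_right])
next
  show "\<exists>P Q :: int \<Rightarrow> complex poly. finite {j. P j \<noteq> 0} \<and>
       (\<forall>b. \<not> algebraic b \<longrightarrow>
          (\<forall>j. poly (Q j) b \<noteq> 0 \<and> lk (ee n b) j = poly (P j) b / poly (Q j) b))"
    by (intro exI[of _ "Pc n"] exI[of _ "\<lambda>_. 1"]) (simp add: finite_Pc lookup_ee)
next
  fix b :: complex and emb :: "complex \<Rightarrow> 'r::ring_1" and T \<pi> Yi :: 'r
  assume h: "\<not> algebraic b \<and> calg_emb emb \<and> \<pi> * \<pi> = 1 \<and>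
       (T - emb b) * (T + emb (inverse b)) = 0 \<and> (\<pi> * T) * Yi = 1 \<and> Yi * (\<pi> * T) = 1"
  then have b: "b \<noteq> 0" by auto
  interpret ahaL emb b T \<pi> Yi using h b by unfold_locales auto
  show "aeval emb (\<pi> * T) Yi (ee n (inverse b)) * Pplus emb b T = psi emb b T \<pi> n"
    using aha_main unfolding P_def .
qed

end
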